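(* Let $\langle \mathscr{A} \mid \mathscr{R} \rangle$ be a $C(4)$ equivalence presentation. Then the monoid presented is left cancellative if and only if $\mathscr{R}$ contains no relation of the form $(ar, as)$ where $a \in \mathscr{A}$ and $r, s \in \mathscr{A}^*$ with $r \neq s$.
   Context: A monoid presentation $\langle \mathscr{A} \mid \mathscr{R} \rangle$ consists of an alphabet $\mathscr{A}$ and a set $\mathscr{R} \subseteq \mathscr{A}^* \times \mathscr{A}^*$ of relations; the monoid presented is $\mathscr{A}^*$ modulo the smallest congruence containing $\mathscr{R}$. A relation word is a word occurring as one side of a relation. A piece is a word which occurs as a factor of two distinct relation words, or in two different (possibly overlapping) positions within one relation word; the empty word is always a piece. The presentation is $C(n)$ if no relation word can be written as a product of strictly fewer than $n$ pieces. It is an equivalence presentation if $\mathscr{R}$ is an equivalence relation on the set of relation words (reflexive on relation words, symmetric and transitive). *)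

theory Defs
  imports Main
begin

text \<open>A monoid presentation over the alphabet given by the type 'a: a set R of
pairs of words (lists). The monoid presented is the free monoid modulo the
smallest congruence containing R.\<close>

inductive pres_cong :: "('a list \<times> 'a list) set \<Rightarrow> 'a list \<Rightarrow> 'a list \<Rightarrow> bool"
  for R :: "('a list \<times> 'a list) set" where
  base: "(u, v) \<in> R \<Longrightarrow> pres_cong R u v"
| refl: "pres_cong R u u"
| sym: "pres_cong R u v \<Longrightarrow> pres_cong R v u"
| trans: "pres_cong R u v \<Longrightarrow> pres_cong R v w \<Longrightarrow> pres_cong R u w"
| left: "pres_cong R u v \<Longrightarrow> pres_cong R (x @ u) (x @ v)"
| right: "pres_cong R u v \<Longrightarrow> pres_cong R (u @ x) (v @ x)"

definition left_cancellative_pres :: "('a list \<times> 'a list) set \<Rightarrow> bool" where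
  "left_cancellative_pres R \<longleftrightarrow>
     (\<forall>u v w. pres_cong R (u @ v) (u @ w) \<longrightarrow> pres_cong R v w)"

definition rel_words :: "('a list \<times> 'a list) set \<Rightarrow> 'a list set" where
  "rel_words R = {l. \<exists>r. (l, r) \<in> R} \<union> {r. \<exists>l. (l, r) \<in> R}"

definition is_factor :: "'a list \<Rightarrow> 'a list \<Rightarrow> bool" where
  "is_factor p w \<longleftrightarrow> (\<exists>x y. w = x @ p @ y)"

definition is_piece :: "('a list \<times> 'a list) set \<Rightarrow> 'a list \<Rightarrow> bool" where
  "is_piece R p \<longleftrightarrow> p = [] \<or>
     (\<exists>w1 \<in> rel_words R. \<exists>w2 \<in> rel_words R. w1 \<noteq> w2 \<and> is_factor p w1 \<and> is_factor p w2) \<or>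
     (\<exists>w \<in> rel_words R. \<exists>x y x' y'. w = x @ p @ y \<and> w = x' @ p @ y' \<and> length x \<noteq> length x')"

definition small_overlap_C :: "nat \<Rightarrow> ('a list \<times> 'a list) set \<Rightarrow> bool" where
  "small_overlap_C n R \<longleftrightarrow>
     (\<forall>w \<in> rel_words R. \<not> (\<exists>ps. length ps < n \<and> concat ps = w \<and> (\<forall>p \<in> set ps. is_piece R p)))"

definition equivalence_presentation :: "('a list \<times> 'a list) set \<Rightarrow> bool" where
  "equivalence_presentation R \<longleftrightarrow> equiv (rel_words R) R"

end

theory Submission
  imports Defs
begin


definition xl :: "('a list \<times> 'a list) set \<Rightarrow> 'a list \<Rightarrow> nat" where
  "xl R W = (GREATEST k. k \<le> length W \<and> is_piece R (take k W))"
definition zl :: "('a list \<times> 'a list) set \<Rightarrow> 'a list \<Rightarrow> nat" where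
  "zl R W = (GREATEST k. k \<le> length W \<and> is_piece R (drop (length W - k) W))"
definition hp :: "('a list \<times> 'a list) set \<Rightarrow> 'a list \<Rightarrow> nat" where
  "hp R W = length W - zl R W"

lemma piece_nil[simp]: "is_piece R []" by (simp add: is_piece_def)

lemma xl_props: "xl R W \<le> length W \<and> is_piece R (take (xl R W) W)"
proof -
  have "(\<lambda>k. k \<le> length W \<and> is_piece R (take k W)) (xl R W)"
    unfolding xl_def by (rule GreatestI_nat[where k=0 and b="length W"]) auto
  thus ?thesis by simp
qed

lemma xl_max: "k \<le> length W \<Longrightarrow> is_piece R (take k W) \<Longrightarrow> k \<le> xl R W"
  unfolding xl_def by (rule Greatest_le_nat[where b="length W"]) auto

lemma zl_props: "zl R W \<le> length W \<and> is_piece R (drop (length W - zl R W) W)"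
proof -
  have "(\<lambda>k. k \<le> length W \<and> is_piece R (drop (length W - k) W)) (zl R W)"
    unfolding zl_def by (rule GreatestI_nat[where k=0 and b="length W"]) auto
  thus ?thesis by simp
qed

lemma zl_max: "k \<le> length W \<Longrightarrow> is_piece R (drop (length W - k) W) \<Longrightarrow> k \<le> zl R W"
  unfolding zl_def by (rule Greatest_le_nat[where b="length W"]) auto

lemma hp_le: "hp R W \<le> length W" by (simp add: hp_def)

lemma Zw_piece: "is_piece R (drop (hp R W) W)"
  using zl_props[of R W] by (simp add: hp_def)

lemma hp_max: "is_piece R (drop j W) \<Longrightarrow> hp R W \<le> j"
proof (cases "j \<le> length W")
  case True
  assume p: "is_piece R (drop j W)"
  have "length W - j \<le> zl R W"
    by (rule zl_max) (use True p in auto)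
  thus ?thesis by (simp add: hp_def)
next
  case False thus ?thesis using hp_le[of R W] by simp
qed

lemma xl_max': "is_piece R (take j W) \<Longrightarrow> j \<le> length W \<Longrightarrow> j \<le> xl R W"
  using xl_max by blast

lemma piece_sub: assumes "is_piece R (a @ q @ b)" shows "is_piece R q"
proof -
  { assume "\<exists>w1\<in>rel_words R. \<exists>w2\<in>rel_words R. w1 \<noteq> w2 \<and> is_factor (a @ q @ b) w1 \<and> is_factor (a @ q @ b) w2"
    then obtain w1 w2 x1 y1 x2 y2 where "w1\<in>rel_words R" "w2\<in>rel_words R" "w1 \<noteq> w2"
      "w1 = (x1 @ a) @ q @ (b @ y1)" "w2 = (x2 @ a) @ q @ (b @ y2)" by (auto simp: is_factor_def)
    hence ?thesis unfolding is_piece_def is_factor_def by blast }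
  moreover
  { assume "\<exists>w\<in>rel_words R. \<exists>x y x' y'. w = x @ (a @ q @ b) @ y \<and> w = x' @ (a @ q @ b) @ y' \<and> length x \<noteq> length x'"
    then obtain w x y x' y' where "w\<in>rel_words R" "w = (x @ a) @ q @ (b @ y)" "w = (x' @ a) @ q @ (b @ y')" "length (x@a) \<noteq> length (x'@a)" by auto
    hence ?thesis unfolding is_piece_def by blast }
  moreover have "a @ q @ b = [] \<Longrightarrow> ?thesis" by simp
  ultimately show ?thesis using assms[unfolded is_piece_def] by blast
qed

lemma piece_take: "is_piece R p \<Longrightarrow> is_piece R (take k p)"
  using piece_sub[of R "[]" "take k p" "drop k p"] by simp
lemma piece_drop: "is_piece R p \<Longrightarrow> is_piece R (drop k p)"
  using piece_sub[of R "take k p" "drop k p" "[]"] by simp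

lemma piece_common:
  assumes "w1 \<in> rel_words R" "w2 \<in> rel_words R" "w1 = x1 @ p @ y1" "w2 = x2 @ p @ y2"
    "w1 \<noteq> w2 \<or> length x1 \<noteq> length x2"
  shows "is_piece R p"
  using assms unfolding is_piece_def is_factor_def by metis

lemma rel_words_fst: "(l, r) \<in> R \<Longrightarrow> l \<in> rel_words R" by (auto simp: rel_words_def)
lemma rel_words_snd: "(l, r) \<in> R \<Longrightarrow> r \<in> rel_words R" by (auto simp: rel_words_def)

locale c4 = fixes R :: "('a list \<times> 'a list) set" assumes C4: "small_overlap_C 4 R"
begin

lemma no_pieces: "w \<in> rel_words R \<Longrightarrow> concat ps = w \<Longrightarrow> length ps < 4 \<Longrightarrow> \<forall>p\<in>set ps. is_piece R p \<Longrightarrow> False"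
  using C4 unfolding small_overlap_C_def by blast

lemma one_piece: "w \<in> rel_words R \<Longrightarrow> is_piece R w \<Longrightarrow> False"
  using no_pieces[of w "[w]"] by simp
lemma two_pieces: "p @ q \<in> rel_words R \<Longrightarrow> is_piece R p \<Longrightarrow> is_piece R q \<Longrightarrow> False"
  using no_pieces[of "p@q" "[p,q]"] by simp
lemma three_pieces: "p @ q @ s \<in> rel_words R \<Longrightarrow> is_piece R p \<Longrightarrow> is_piece R q \<Longrightarrow> is_piece R s \<Longrightarrow> False"
  using no_pieces[of "p@q@s" "[p,q,s]"] by simp

lemma rw_nonempty: "w \<in> rel_words R \<Longrightarrow> w \<noteq> []"
  using one_piece by fastforce

lemma F3: assumes "w1 \<in> rel_words R" "w2 \<in> rel_words R" "w1 = x @ w2 @ y"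
  shows "x = [] \<and> y = []"
proof (rule ccontr)
  assume ne: "\<not> (x = [] \<and> y = [])"
  have "w1 \<noteq> w2"
  proof
    assume "w1 = w2"
    hence "length w1 = length x + length w1 + length y" using assms(3) by (metis length_append add.assoc)
    thus False using ne by simp
  qed
  hence "is_piece R w2" using piece_common[of w1 R w2 x w2 y "[]" "[]"] assms by simp
  thus False using one_piece assms(2) by blast
qed

lemma Ynonempty: assumes "W \<in> rel_words R" shows "xl R W < hp R W"
proof (rule ccontr)
  assume "\<not> ?thesis"
  hence le: "hp R W \<le> xl R W" by simp
  have "is_piece R (take (xl R W) W)" using xl_props by blast
  moreover have "drop (xl R W) W = drop (xl R W - hp R W) (drop (hp R W) W)"
    using le by simp
  hence "is_piece R (drop (xl R W) W)" using Zw_piece piece_drop by metis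
  ultimately show False using two_pieces[of "take (xl R W) W" "drop (xl R W) W"] assms by simp
qed

lemma hp_pos: "W \<in> rel_words R \<Longrightarrow> 0 < hp R W" using Ynonempty[of W] by simp

end


inductive clean :: "('a list \<times> 'a list) set \<Rightarrow> 'a list \<Rightarrow> 'a list \<Rightarrow> bool" for R where
  cA: "W \<in> rel_words R \<Longrightarrow> clean R W (W @ s)"
| cB: "W \<in> rel_words R \<Longrightarrow> clean R V t \<Longrightarrow> Z1 @ Z2 = drop (hp R W) W \<Longrightarrow> clean R W (take (hp R W) W @ Z1 @ t)"

lemma clean_form: "clean R W z \<Longrightarrow> W \<in> rel_words R \<and> (\<exists>t. z = take (hp R W) W @ t)"
proof (induction rule: clean.induct)
  case (cA W s)
  then show ?case by (metis append_take_drop_id append.assoc)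
qed auto

context c4 begin

lemma at_zero: assumes W: "W \<in> rel_words R" and l: "l \<in> rel_words R"
  and eq: "l @ y = take (hp R W) W @ t" shows "l = W"
proof -
  let ?XY = "take (hp R W) W" let ?Z = "drop (hp R W) W"
  have WW: "W = ?XY @ ?Z" by simp
  from eq obtain us where "(l = ?XY @ us \<and> us @ y = t) \<or> (l @ us = ?XY \<and> y = us @ t)"
    using append_eq_append_conv2 by metis
  thus ?thesis
  proof
    assume "l @ us = ?XY \<and> y = us @ t"
    hence "W = [] @ l @ (us @ ?Z)" by (metis append.assoc append_take_drop_id self_append_conv2)
    thus ?thesis using F3[OF W l] by (metis append.right_neutral self_append_conv2)
  next
    assume h: "l = ?XY @ us \<and> us @ y = t"
    show ?thesis
    proof (rule ccontr)
      assume "l \<noteq> W"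
      hence "is_piece R ?XY" using piece_common[OF W l, of "[]" ?XY ?Z "[]" us] h by simp
      hence "hp R W \<le> xl R W" using xl_max'[of R "hp R W" W] hp_le[of R W] by simp
      thus False using Ynonempty[OF W] by simp
    qed
  qed
qed

lemma lemB: assumes V: "V \<in> rel_words R" and l: "l \<in> rel_words R"
  and lu: "l = u @ v" and u: "u \<noteq> []" and eq: "v @ y = take (hp R V) V @ rest"
  shows "is_piece R v"
proof -
  let ?XY = "take (hp R V) V" let ?Z = "drop (hp R V) V"
  from eq obtain us where "(v = ?XY @ us \<and> us @ y = rest) \<or> (v @ us = ?XY \<and> y = us @ rest)"
    using append_eq_append_conv2 by metis
  thus ?thesis
  proof
    assume "v @ us = ?XY \<and> y = us @ rest"
    hence "V = [] @ v @ (us @ ?Z)" by (metis append.assoc append_take_drop_id self_append_conv2)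
    thus ?thesis using piece_common[OF V l, of "[]" v "us @ ?Z" u "[]"] lu u by simp
  next
    assume h: "v = ?XY @ us \<and> us @ y = rest"
    have "is_piece R ?XY" using piece_common[OF V l, of "[]" ?XY ?Z "u" us] h lu u by simp
    hence "hp R V \<le> xl R V" using xl_max'[of R "hp R V" V] hp_le[of R V] by simp
    thus ?thesis using Ynonempty[OF V] by simp
  qed
qed

lemma in_head: assumes W: "W \<in> rel_words R" and l: "l \<in> rel_words R"
  and eq: "x @ l @ y = take (hp R W) W @ t" and x: "x \<noteq> []" and xlen: "length x < hp R W"
  shows "\<exists>us us2. x @ us = take (hp R W) W \<and> l = us @ us2 \<and> us2 @ y = t \<and> xl R W < length x"
proof -
  let ?XY = "take (hp R W) W" let ?Z = "drop (hp R W) W"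
  from eq obtain us where "(x = ?XY @ us \<and> us @ l @ y = t) \<or> (x @ us = ?XY \<and> l @ y = us @ t)"
    using append_eq_append_conv2 by metis
  moreover have "\<not> (x = ?XY @ us)" using xlen hp_le[of R W] by auto
  ultimately have h1: "x @ us = ?XY" "l @ y = us @ t" by auto
  from h1(2) obtain us2 where "(l = us @ us2 \<and> us2 @ y = t) \<or> (l @ us2 = us \<and> y = us2 @ t)"
    using append_eq_append_conv2 by metis
  thus ?thesis
  proof
    assume "l @ us2 = us \<and> y = us2 @ t"
    hence "W = x @ l @ (us2 @ ?Z)" using h1 by (metis append.assoc append_take_drop_id)
    thus ?thesis using F3[OF W l] x by simp
  next
    assume h2: "l = us @ us2 \<and> us2 @ y = t"
    have "xl R W < length x"
    proof (rule ccontr)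
      assume "\<not> ?thesis"
      hence lx: "length x \<le> xl R W" by simp
      have Wd: "W = x @ us @ ?Z" using h1 by (metis append.assoc append_take_drop_id)
      have "x = take (length x) (take (xl R W) W)" using Wd lx
        by (metis append_eq_conv_conj take_take min.absorb1)
      hence px: "is_piece R x" using xl_props piece_take by metis
      have pus: "is_piece R us" using piece_common[OF W l, of x us ?Z "[]" us2] Wd h2 x by simp
      show False using three_pieces[of x us ?Z] Wd W px pus Zw_piece by metis
    qed
    thus ?thesis using h1 h2 by blast
  qed
qed

lemma split_long: assumes "length A \<le> length x" "x @ w = A @ t"
  shows "\<exists>x'. x = A @ x' \<and> x' @ w = t"
proof -
  from assms(2) obtain us where "(x = A @ us \<and> us @ w = t) \<or> (x @ us = A \<and> w = us @ t)"
    using append_eq_append_conv2 by metis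
  thus ?thesis using assms(1) by auto
qed

lemma clean_step: "clean R W z \<Longrightarrow> z = x @ l @ y \<Longrightarrow> (l, r) \<in> R \<Longrightarrow>
   (x = [] \<and> l = W) \<or> (hp R W \<le> length x \<and> clean R W (x @ r @ y))"
proof (induction arbitrary: x y rule: clean.induct)
  case (cA W s)
  let ?XY = "take (hp R W) W" let ?Z = "drop (hp R W) W"
  have l: "l \<in> rel_words R" and r: "r \<in> rel_words R" using cA rel_words_fst rel_words_snd by metis+
  have zz: "x @ l @ y = ?XY @ (?Z @ s)" using cA by (metis append.assoc append_take_drop_id)
  have lXY: "length ?XY = hp R W" using hp_le[of R W] by simp
  consider "x = []" | "x \<noteq> [] \<and> length x < hp R W" | "hp R W \<le> length x" by linarith
  thus ?case
  proof cases
    case 1 thus ?thesis using at_zero[OF cA(1) l, of y "?Z @ s"] zz by simp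
  next
    case 2
    then obtain us us2 where h: "x @ us = ?XY" "l = us @ us2" "us2 @ y = ?Z @ s" "xl R W < length x"
      using in_head[OF cA(1) l zz] by blast
    from h(3) obtain v where "(us2 = ?Z @ v \<and> v @ y = s) \<or> (us2 @ v = ?Z \<and> y = v @ s)"
      using append_eq_append_conv2 by metis
    thus ?thesis
    proof
      assume a: "us2 = ?Z @ v \<and> v @ y = s"
      have Wd: "W = x @ (us @ ?Z) @ []" using h(1) by (metis append.assoc append_take_drop_id append_Nil2)
      have "is_piece R (us @ ?Z)" using piece_common[OF cA(1) l Wd, of "[]" v] h(2) a 2 by simp
      moreover have "drop (length x) W = us @ ?Z" using Wd by (metis append_Nil2 append_eq_conv_conj)
      ultimately have "hp R W \<le> length x" using hp_max by metis
      thus ?thesis using 2 by simp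
    next
      assume a: "us2 @ v = ?Z \<and> y = v @ s"
      have "W = x @ l @ v" using h(1,2) a by (metis append.assoc append_take_drop_id)
      thus ?thesis using F3[OF cA(1) l] 2 by blast
    qed
  next
    case 3
    then obtain x' where x': "x = ?XY @ x'" "x' @ l @ y = ?Z @ s" using split_long[OF _ zz] lXY by metis
    from x'(2) obtain us where "(x' = ?Z @ us \<and> us @ l @ y = s) \<or> (x' @ us = ?Z \<and> l @ y = us @ s)"
      using append_eq_append_conv2 by metis
    thus ?thesis
    proof
      assume a: "x' = ?Z @ us \<and> us @ l @ y = s"
      have "x @ r @ y = W @ (us @ r @ y)" using x'(1) a by simp
      thus ?thesis using clean.cA[OF cA(1)] 3 by metis
    next
      assume a: "x' @ us = ?Z \<and> l @ y = us @ s"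
      have "clean R W (?XY @ x' @ (r @ y))"
        using clean.cB[OF cA(1) clean.cA[OF r, of y]] a by blast
      thus ?thesis using x'(1) 3 by simp
    qed
  qed
next
  case (cB W V t Z1 Z2)
  let ?XY = "take (hp R W) W" let ?Z = "drop (hp R W) W"
  have l: "l \<in> rel_words R" and r: "r \<in> rel_words R" using cB rel_words_fst rel_words_snd by metis+
  have zz: "x @ l @ y = ?XY @ (Z1 @ t)" using cB by metis
  have lXY: "length ?XY = hp R W" using hp_le[of R W] by simp
  have Wd0: "W = ?XY @ Z1 @ Z2" using cB(3) by (metis append_take_drop_id)
  obtain rest where trest: "t = take (hp R V) V @ rest" and V: "V \<in> rel_words R"
    using clean_form[OF cB(2)] by blast
  consider "x = []" | "x \<noteq> [] \<and> length x < hp R W" | "hp R W \<le> length x" by linarith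
  thus ?case
  proof cases
    case 1 thus ?thesis using at_zero[OF cB(1) l, of y "Z1 @ t"] zz by simp
  next
    case 2
    then obtain us us2 where h: "x @ us = ?XY" "l = us @ us2" "us2 @ y = Z1 @ t" "xl R W < length x"
      using in_head[OF cB(1) l zz] by blast
    have usne: "us \<noteq> []" using h(1) 2 lXY by auto
    from h(3) obtain v where "(us2 = Z1 @ v \<and> v @ y = t) \<or> (us2 @ v = Z1 \<and> y = v @ t)"
      using append_eq_append_conv2 by metis
    thus ?thesis
    proof
      assume a: "us2 = Z1 @ v \<and> v @ y = t"
      show ?thesis
      proof (cases "v = []")
        case True
        have "W = x @ l @ Z2" using Wd0 h(1,2) a True by (metis append.assoc append_Nil2)
        thus ?thesis using F3[OF cB(1) l] 2 by blast
      next
        case False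
        have lv: "l = (us @ Z1) @ v" using h(2) a by simp
        have pv: "is_piece R v" using lemB[OF V l lv _, of y rest] a trest usne by simp
        have Wd: "W = x @ (us @ Z1) @ Z2" using Wd0 h(1) by (metis append.assoc)
        have "is_piece R (us @ Z1)" using piece_common[OF cB(1) l Wd, of "[]" v] lv 2 by simp
        thus ?thesis using two_pieces[of "us @ Z1" v] lv l pv by simp
      qed
    next
      assume a: "us2 @ v = Z1 \<and> y = v @ t"
      have "W = x @ l @ (v @ Z2)" using Wd0 h(1,2) a by (metis append.assoc)
      thus ?thesis using F3[OF cB(1) l] 2 by blast
    qed
  next
    case 3
    then obtain x' where x': "x = ?XY @ x'" "x' @ l @ y = Z1 @ t" using split_long[OF _ zz] lXY by metis
    show ?thesis
    proof (cases "\<exists>x''. x' = Z1 @ x''")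
      case True
      then obtain x'' where x'': "x' = Z1 @ x''" by blast
      hence tt: "t = x'' @ l @ y" using x'(2) by simp
      from cB.IH[OF tt cB.prems(2)] show ?thesis
      proof
        assume "x'' = [] \<and> l = V"
        hence "x @ r @ y = ?XY @ Z1 @ (r @ y)" using x' x'' by simp
        thus ?thesis using clean.cB[OF cB(1) clean.cA[OF r, of y] cB(3)] 3 by metis
      next
        assume "hp R V \<le> length x'' \<and> clean R V (x'' @ r @ y)"
        hence "clean R W (?XY @ Z1 @ (x'' @ r @ y))" using clean.cB[OF cB(1) _ cB(3)] by blast
        thus ?thesis using x' x'' 3 by simp
      qed
    next
      case False
      from x'(2) obtain us where "(x' = Z1 @ us \<and> us @ l @ y = t) \<or> (x' @ us = Z1 \<and> l @ y = us @ t)"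
        using append_eq_append_conv2 by metis
      with False have a: "x' @ us = Z1" "l @ y = us @ t" by auto
      from a(2) obtain v where "(l = us @ v \<and> v @ y = t) \<or> (l @ v = us \<and> y = v @ t)"
        using append_eq_append_conv2 by metis
      thus ?thesis
      proof
        assume b: "l = us @ v \<and> v @ y = t"
        have Wd: "W = (?XY @ x') @ us @ Z2" using Wd0 a(1) by (metis append.assoc)
        have ne: "?XY @ x' \<noteq> []" using hp_pos[OF cB(1)] lXY by auto
        show ?thesis
        proof (cases "v = []")
          case True
          thus ?thesis using F3[OF cB(1) l, of "?XY @ x'" Z2] Wd b ne by simp
        next
          case False
          have "us \<noteq> []"
          proof
            assume "us = []" hence "x' = Z1" using a by simp
            thus False using False \<open>\<not> (\<exists>x''. x' = Z1 @ x'')\<close> by simp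
          qed
          have pv: "is_piece R v" using lemB[OF V l _ \<open>us \<noteq> []\<close>] b trest by metis
          have "cB_Zd": "drop (hp R W) W = x' @ us @ Z2" using cB(3) a(1) by (metis append.assoc)
          have "is_piece R us" using piece_sub[of R x' us Z2] Zw_piece[of R W] cB_Zd by metis
          thus ?thesis using two_pieces[of us v] b l pv by simp
        qed
      next
        assume b: "l @ v = us \<and> y = v @ t"
        have "W = (?XY @ x') @ l @ (v @ Z2)" using Wd0 a(1) b by (metis append.assoc)
        hence "?XY @ x' = []" using F3[OF cB(1) l] by blast
        thus ?thesis using hp_pos[OF cB(1)] lXY by simp
      qed
    qed
  qed
qed

end


definition step :: "('a list \<times> 'a list) set \<Rightarrow> 'a list \<Rightarrow> 'a list \<Rightarrow> bool" where
  "step R u v \<longleftrightarrow> (\<exists>x l r y. (l, r) \<in> R \<and> u = x @ l @ y \<and> v = x @ r @ y)"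

lemma step_ctx: "step R u v \<Longrightarrow> step R (p @ u @ q) (p @ v @ q)"
  unfolding step_def by (metis append.assoc)

lemma pow_ctx: "(step R ^^ k) u v \<Longrightarrow> (step R ^^ k) (p @ u @ q) (p @ v @ q)"
proof (induction k arbitrary: v)
  case 0 thus ?case by simp
next
  case (Suc k)
  then obtain w where "(step R ^^ k) u w" "step R w v" by auto
  thus ?case using Suc.IH step_ctx by fastforce
qed

lemma pow_pre: "(step R ^^ k) u v \<Longrightarrow> (step R ^^ k) (p @ u) (p @ v)"
  using pow_ctx[where q="[]"] by simp

definition TE where
  "TE R W t W2 t2 m \<longleftrightarrow> (W2 = W \<and> (\<exists>k\<le>m. (step R ^^ k) t t2)) \<or>
     (\<exists>s s2 k1 k2 k3. k1 + k2 + k3 < m \<and> (step R ^^ k1) t (drop (hp R W) W @ s) \<and>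
        (step R ^^ k2) s s2 \<and> (step R ^^ k3) (drop (hp R W2) W2 @ s2) t2)"

locale c4e = c4 +
  assumes EQ: "equiv (rel_words R) R"
begin

lemma Rrefl: "W \<in> rel_words R \<Longrightarrow> (W, W) \<in> R"
  using EQ unfolding equiv_def refl_on_def by blast
lemma Rtrans: "(a, b) \<in> R \<Longrightarrow> (b, c) \<in> R \<Longrightarrow> (a, c) \<in> R"
  using EQ unfolding equiv_def trans_def by blast
lemma Rsym: "(a, b) \<in> R \<Longrightarrow> (b, a) \<in> R"
  using EQ unfolding equiv_def sym_def by blast

lemma J:
  assumes WC: "\<forall>k<N. \<forall>p u v. (step R ^^ k) (p @ u) (p @ v) \<longrightarrow> (\<exists>k'\<le>k. (step R ^^ k') u v)"
  shows "m \<le> N \<Longrightarrow> clean R W (take (hp R W) W @ t) \<Longrightarrow> (step R ^^ m) (take (hp R W) W @ t) z2 \<Longrightarrow>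
    \<exists>W2 t2. (W, W2) \<in> R \<and> z2 = take (hp R W2) W2 @ t2 \<and> TE R W t W2 t2 m"
proof (induction m arbitrary: W t)
  case 0
  have "W \<in> rel_words R" using clean_form[OF 0(2)] by blast
  hence "(W, W) \<in> R" by (rule Rrefl)
  moreover have "TE R W t W t 0" unfolding TE_def by auto
  ultimately show ?case using 0(3) by auto
next
  case (Suc m)
  let ?XY = "take (hp R W) W" let ?Z = "drop (hp R W) W"
  have W: "W \<in> rel_words R" using clean_form[OF Suc(3)] by blast
  obtain z1 where z1: "step R (?XY @ t) z1" "(step R ^^ m) z1 z2" using relpowp_Suc_D2[OF Suc(4)] by blast
  then obtain x l r y where st: "(l, r) \<in> R" "?XY @ t = x @ l @ y" "z1 = x @ r @ y"
    unfolding step_def by blast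
  from clean_step[OF Suc(3) st(2) st(1)]
  show ?case
  proof
    assume a: "x = [] \<and> l = W"
    have "?XY @ t = ?XY @ (?Z @ y)" using st(2) a by (metis append.assoc append_take_drop_id self_append_conv2)
    hence ty: "t = ?Z @ y" by simp
    have r: "r \<in> rel_words R" using st(1) rel_words_snd by metis
    have z1r: "z1 = take (hp R r) r @ (drop (hp R r) r @ y)" using st(3) a by (metis append.assoc append_take_drop_id self_append_conv2)
    have cr: "clean R r (take (hp R r) r @ (drop (hp R r) r @ y))" using clean.cA[OF r, of y] by (metis append.assoc append_take_drop_id)
    obtain W2 t2 where IH: "(r, W2) \<in> R" "z2 = take (hp R W2) W2 @ t2" "TE R r (drop (hp R r) r @ y) W2 t2 m"
      using Suc.IH[OF _ cr] Suc(2) z1(2) z1r by (metis Suc_leD)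
    have WW2: "(W, W2) \<in> R" using Rtrans st(1) a IH(1) by blast
    have "TE R W t W2 t2 (Suc m)"
      using IH(3) unfolding TE_def
    proof (elim disjE exE conjE)
      fix k assume h: "W2 = r" "k \<le> m" "(step R ^^ k) (drop (hp R r) r @ y) t2"
      have e1: "(step R ^^ 0) t (drop (hp R W) W @ y)" using ty by simp
      have e2: "(step R ^^ 0) y y" by simp
      have e3: "(step R ^^ k) (drop (hp R W2) W2 @ y) t2" using h by simp
      have e4: "0 + 0 + k < Suc m" using h by simp
      show "(W2 = W \<and> (\<exists>k\<le>Suc m. (step R ^^ k) t t2)) \<or>
     (\<exists>s s2 k1 k2 k3. k1 + k2 + k3 < Suc m \<and> (step R ^^ k1) t (drop (hp R W) W @ s) \<and>
        (step R ^^ k2) s s2 \<and> (step R ^^ k3) (drop (hp R W2) W2 @ s2) t2)"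
        using e1 e2 e3 e4 by blast
    next
      fix s s2 k1 k2 k3 assume h: "k1 + k2 + k3 < m" "(step R ^^ k1) (drop (hp R r) r @ y) (drop (hp R r) r @ s)"
        "(step R ^^ k2) s s2" "(step R ^^ k3) (drop (hp R W2) W2 @ s2) t2"
      have "k1 < N" using h(1) Suc(2) by linarith
      then obtain k1' where k1': "k1' \<le> k1" "(step R ^^ k1') y s" using WC h(2) by blast
      have e2: "(step R ^^ (k1' + k2)) y s2" using relpowp_trans k1'(2) h(3) by metis
      have e1: "(step R ^^ 0) t (drop (hp R W) W @ y)" using ty by simp
      have e4: "0 + (k1' + k2) + k3 < Suc m" using h(1) k1'(1) by linarith
      show "(W2 = W \<and> (\<exists>k\<le>Suc m. (step R ^^ k) t t2)) \<or>
     (\<exists>s s2 k1 k2 k3. k1 + k2 + k3 < Suc m \<and> (step R ^^ k1) t (drop (hp R W) W @ s) \<and>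
        (step R ^^ k2) s s2 \<and> (step R ^^ k3) (drop (hp R W2) W2 @ s2) t2)"
        using e1 e2 h(4) e4 by blast
    qed
    thus ?thesis using WW2 IH(2) by blast
  next
    assume a: "hp R W \<le> length x \<and> clean R W (x @ r @ y)"
    have lXY: "length ?XY = hp R W" using hp_le[of R W] by simp
    obtain x' where x': "x = ?XY @ x'" "x' @ l @ y = t" using split_long[of ?XY x "l @ y" t] a st(2) lXY by metis
    have stt: "step R t (x' @ r @ y)" unfolding step_def using st(1) x'(2) by blast
    have z1': "z1 = ?XY @ (x' @ r @ y)" using st(3) x' by simp
    obtain W2 t2 where IH: "(W, W2) \<in> R" "z2 = take (hp R W2) W2 @ t2" "TE R W (x' @ r @ y) W2 t2 m"
      using Suc.IH[of W "x' @ r @ y"] Suc(2) a z1' z1(2) x'(1) by (metis Suc_leD append.assoc)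
    have "TE R W t W2 t2 (Suc m)"
      using IH(3) unfolding TE_def
    proof (elim disjE exE conjE)
      fix k assume hk: "W2 = W" "k \<le> m" "(step R ^^ k) (x' @ r @ y) t2"
      have "(step R ^^ Suc k) t t2" using relpowp_Suc_I2[of "step R", OF stt hk(3)] .
      moreover have "Suc k \<le> Suc m" using hk by simp
      ultimately show "(W2 = W \<and> (\<exists>k\<le>Suc m. (step R ^^ k) t t2)) \<or>
     (\<exists>s s2 k1 k2 k3. k1 + k2 + k3 < Suc m \<and> (step R ^^ k1) t (drop (hp R W) W @ s) \<and>
        (step R ^^ k2) s s2 \<and> (step R ^^ k3) (drop (hp R W2) W2 @ s2) t2)" using \<open>W2 = W\<close> by blast
    next
      fix s s2 k1 k2 k3 assume h: "k1 + k2 + k3 < m" "(step R ^^ k1) (x' @ r @ y) (drop (hp R W) W @ s)"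
        "(step R ^^ k2) s s2" "(step R ^^ k3) (drop (hp R W2) W2 @ s2) t2"
      have e1: "(step R ^^ Suc k1) t (drop (hp R W) W @ s)" using relpowp_Suc_I2[of "step R", OF stt h(2)] .
      have e4: "Suc k1 + k2 + k3 < Suc m" using h(1) by simp
      show "(W2 = W \<and> (\<exists>k\<le>Suc m. (step R ^^ k) t t2)) \<or> (\<exists>s s2 k1 k2 k3. k1 + k2 + k3 < Suc m \<and> (step R ^^ k1) t (drop (hp R W) W @ s) \<and>
        (step R ^^ k2) s s2 \<and> (step R ^^ k3) (drop (hp R W2) W2 @ s2) t2)"
        using e1 e4 h(3,4) by blast
    qed
    thus ?thesis using IH by blast
  qed
qed


lemma LC: assumes H: "\<forall>a r s. (a#r, a#s) \<in> R \<longrightarrow> r = s"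
  shows "(step R ^^ N) (a#u) (a#v) \<Longrightarrow> \<exists>k\<le>N. (step R ^^ k) u v"
proof (induction N arbitrary: a u v rule: less_induct)
  case (less N)
  have WC: "\<forall>k<N. \<forall>p u v. (step R ^^ k) (p@u) (p@v) \<longrightarrow> (\<exists>k'\<le>k. (step R ^^ k') u v)"
  proof (intro allI impI)
    fix k p u v assume "k < N" "(step R ^^ k) (p@u) (p@v)"
    thus "\<exists>k'\<le>k. (step R ^^ k') u v"
    proof (induction p arbitrary: k)
      case Nil thus ?case by auto
    next
      case (Cons b p)
      obtain k1 where k1: "k1 \<le> k" "(step R ^^ k1) (p@u) (p@v)"
        using less.IH[OF Cons.prems(1), of b "p@u" "p@v"] Cons.prems(2) by auto
      obtain k' where "k' \<le> k1" "(step R ^^ k') u v" using Cons.IH[of k1] k1 Cons.prems(1) by auto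
      thus ?case using k1 by (blast intro: le_trans)
    qed
  qed
  show ?case
  proof (cases N)
    case 0 thus ?thesis using less.prems by auto
  next
    case (Suc m)
    obtain z1 where z1: "step R (a#u) z1" "(step R ^^ m) z1 (a#v)" using relpowp_Suc_D2 less.prems Suc by metis
    then obtain x l r y where st: "(l,r) \<in> R" "a#u = x@l@y" "z1 = x@r@y" unfolding step_def by blast
    show ?thesis
    proof (cases x)
      case (Cons b x')
      hence u: "u = x'@l@y" and z1': "z1 = a#(x'@r@y)" using st by auto
      obtain k where k: "k \<le> m" "(step R ^^ k) (x'@r@y) v" using less.IH[of m a "x'@r@y" v] z1(2) z1' Suc by auto
      have "step R u (x'@r@y)" unfolding step_def using u st(1) by blast
      hence "(step R ^^ Suc k) u v" using relpowp_Suc_I2[of "step R"] k(2) by blast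
      moreover have "Suc k \<le> N" using k Suc by simp
      ultimately show ?thesis by blast
    next
      case Nil
      have l: "l \<in> rel_words R" using st(1) rel_words_fst by metis
      have auly: "a#u = l@y" using st Nil by simp
      let ?XY = "take (hp R l) l" let ?Z = "drop (hp R l) l"
      have cl: "clean R l (?XY @ (?Z @ y))" using clean.cA[OF l, of y] by (metis append.assoc append_take_drop_id)
      have ly: "l @ y = ?XY @ (?Z @ y)" by (metis append.assoc append_take_drop_id)
      have pw: "(step R ^^ N) (?XY @ (?Z @ y)) (a#v)" using less.prems auly ly by metis
      obtain W2 t2 where JJ: "(l, W2) \<in> R" "a#v = take (hp R W2) W2 @ t2" "TE R l (?Z @ y) W2 t2 N"
        using J[OF WC, of N l "?Z @ y" "a#v"] cl pw by auto
      have W2: "W2 \<in> rel_words R" using JJ(1) rel_words_snd by metis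
      obtain j where hj: "hp R W2 = Suc j" using hp_pos[OF W2] by (metis gr0_implies_Suc)
      obtain c W2' where W2c: "W2 = c # W2'" using rw_nonempty[OF W2] by (cases W2) auto
      have "a#v = (c # take j W2') @ t2" using JJ(2) hj W2c by simp
      hence ca: "c = a" by simp
      obtain l' where lc: "l = a # l'" using auly rw_nonempty[OF l] by (cases l) auto
      have "l' = W2'" using H JJ(1) lc W2c ca by blast
      hence W2l: "W2 = l" using lc W2c ca by simp
      obtain i where hi: "hp R l = Suc i" using hp_pos[OF l] by (metis gr0_implies_Suc)
      define P where "P = take i l'"
      have XYP: "?XY = a # P" using hi lc P_def by simp
      have u: "u = P @ ?Z @ y" using auly ly XYP by simp
      have v: "v = P @ t2" using JJ(2) W2l XYP by simp
      from JJ(3) show ?thesis unfolding TE_def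
      proof (elim disjE exE conjE)
        fix k assume "k \<le> N" "(step R ^^ k) (?Z @ y) t2"
        hence "(step R ^^ k) (P @ ?Z @ y) (P @ t2)" "k \<le> N" using pow_pre by auto
        thus ?thesis using u v by blast
      next
        fix s s2 k1 k2 k3 assume h: "k1 + k2 + k3 < N" "(step R ^^ k1) (?Z @ y) (?Z @ s)"
          "(step R ^^ k2) s s2" "(step R ^^ k3) (drop (hp R W2) W2 @ s2) t2"
        have "k1 < N" using h(1) by linarith
        then obtain k1' where k1': "k1' \<le> k1" "(step R ^^ k1') y s" using WC h(2) by blast
        have e1: "(step R ^^ k1') (?Z @ y) (?Z @ s)" using pow_pre k1'(2) by metis
        have e2: "(step R ^^ k2) (?Z @ s) (?Z @ s2)" using pow_pre h(3) by metis
        have e3: "(step R ^^ k3) (?Z @ s2) t2" using h(4) W2l by simp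
        have "(step R ^^ (k1' + k2 + k3)) (?Z @ y) t2" using relpowp_trans[OF relpowp_trans[OF e1 e2] e3] .
        hence "(step R ^^ (k1' + k2 + k3)) u v" using pow_pre u v by metis
        moreover have "k1' + k2 + k3 \<le> N" using h(1) k1'(1) by linarith
        ultimately show ?thesis by blast
      qed
    qed
  qed
qed

lemma WCfull: assumes H: "\<forall>a r s. (a#r, a#s) \<in> R \<longrightarrow> r = s"
  shows "(step R ^^ k) (p@u) (p@v) \<Longrightarrow> \<exists>k'\<le>k. (step R ^^ k') u v"
proof (induction p arbitrary: k)
  case Nil thus ?case by auto
next
  case (Cons b p)
  obtain k1 where k1: "k1 \<le> k" "(step R ^^ k1) (p@u) (p@v)" using LC[OF H] Cons.prems by fastforce
  obtain k' where "k' \<le> k1" "(step R ^^ k') u v" using Cons.IH k1 by blast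
  thus ?case using k1 by (blast intro: le_trans)
qed

lemma step_sym: "step R u v \<Longrightarrow> step R v u"
  unfolding step_def using Rsym by blast

lemma steps_sym: "(step R)\<^sup>*\<^sup>* u v \<Longrightarrow> (step R)\<^sup>*\<^sup>* v u"
proof (induction rule: rtranclp_induct)
  case base thus ?case by simp
next
  case (step w v) thus ?case using step_sym converse_rtranclp_into_rtranclp by metis
qed

lemma pc_steps: "pres_cong R u v \<Longrightarrow> (step R)\<^sup>*\<^sup>* u v"
proof (induction rule: pres_cong.induct)
  case (base u v)
  have "step R u v" unfolding step_def using base by (metis append_Nil append_Nil2)
  thus ?case by simp
next
  case (refl u) thus ?case by simp
next
  case (sym u v) thus ?case using steps_sym by blast
next
  case (trans u v w) thus ?case by simp
next
  case (left u v x)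
  obtain n where "(step R ^^ n) u v" using left rtranclp_power by metis
  hence "(step R ^^ n) (x@u) (x@v)" using pow_pre by metis
  thus ?case using rtranclp_power by metis
next
  case (right u v x)
  obtain n where "(step R ^^ n) u v" using right rtranclp_power by metis
  hence "(step R ^^ n) ([]@u@x) ([]@v@x)" using pow_ctx by metis
  thus ?case using rtranclp_power by (metis append_Nil)
qed

lemma steps_pc: "(step R)\<^sup>*\<^sup>* u v \<Longrightarrow> pres_cong R u v"
proof (induction rule: rtranclp_induct)
  case base thus ?case by (rule pres_cong.refl)
next
  case (step w v)
  then obtain x l r y where st: "(l,r) \<in> R" "w = x@l@y" "v = x@r@y" unfolding step_def by blast
  have "pres_cong R (l@y) (r@y)" using pres_cong.right[OF pres_cong.base[OF st(1)]] .
  hence "pres_cong R (x@l@y) (x@r@y)" using pres_cong.left by blast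
  thus ?case using step.IH st pres_cong.trans by metis
qed

end

lemma pc_contains: "pres_cong R u v \<Longrightarrow> u = v \<or> ((\<exists>w\<in>rel_words R. \<exists>x y. u = x@w@y) \<and> (\<exists>w\<in>rel_words R. \<exists>x y. v = x@w@y))"
proof (induction rule: pres_cong.induct)
  case (base u v)
  hence "u \<in> rel_words R" "v \<in> rel_words R" using rel_words_fst rel_words_snd by metis+
  thus ?case by (metis append_Nil append_Nil2)
next
  case (left u v x) thus ?case by (metis append.assoc)
next
  case (right u v x) thus ?case by (metis append.assoc)
qed auto

theorem theorem5:
  fixes R :: "('a list \<times> 'a list) set"
  assumes "small_overlap_C 4 R"
    and "equivalence_presentation R"
  shows "left_cancellative_pres R \<longleftrightarrow>
           \<not> (\<exists>a r s. (a # r, a # s) \<in> R \<and> r \<noteq> s)"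
proof -
  interpret c4e R using assms by unfold_locales (simp_all add: equivalence_presentation_def)
  show ?thesis
  proof
    assume LCP: "left_cancellative_pres R"
    show "\<not> (\<exists>a r s. (a # r, a # s) \<in> R \<and> r \<noteq> s)"
    proof
      assume "\<exists>a r s. (a # r, a # s) \<in> R \<and> r \<noteq> s"
      then obtain a r s where h: "(a # r, a # s) \<in> R" "r \<noteq> s" by blast
      have "pres_cong R ([a]@r) ([a]@s)" using pres_cong.base[OF h(1)] by simp
      hence "pres_cong R r s" using LCP unfolding left_cancellative_pres_def by blast
      then obtain w x y where w: "w \<in> rel_words R" "r = x@w@y" using pc_contains h(2) by blast
      have "a#r \<in> rel_words R" using h(1) rel_words_fst by metis
      moreover have "a#r = (a#x)@w@y" using w by simp
      ultimately show False using F3 w(1) by blast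
    qed
  next
    assume "\<not> (\<exists>a r s. (a # r, a # s) \<in> R \<and> r \<noteq> s)"
    hence H: "\<forall>a r s. (a#r, a#s) \<in> R \<longrightarrow> r = s" by blast
    show "left_cancellative_pres R" unfolding left_cancellative_pres_def
    proof (intro allI impI)
      fix u v w assume "pres_cong R (u @ v) (u @ w)"
      then obtain n where "(step R ^^ n) (u@v) (u@w)" using pc_steps rtranclp_power by metis
      then obtain k where "(step R ^^ k) v w" using WCfull[OF H] by blast
      thus "pres_cong R v w" using steps_pc rtranclp_power by metis
    qed
  qed
qed

end
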